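(* Let $\Gamma$ be a group such that the comparison map $H^2_b(\Gamma,\mathbb R)\to H^2(\Gamma,\mathbb R)$ is not injective. Then $\mathrm{def}^{(1)}(\Gamma)\ge\sqrt3$; in particular $\Gamma$ is not Ulam stable.
   Context: For maps $\mu,\nu:\Gamma\to U(n)$: $\|\mu-\nu\|=\sup_\gamma\|\mu(\gamma)-\nu(\gamma)\|$ (operator norm), $D(\mu)=\inf\{\|\mu-\nu\|:\nu\in\mathrm{Hom}(\Gamma,U(n))\}$, $\mathrm{def}(\mu)=\sup_{x,y}\|\mu(xy)-\mu(x)\mu(y)\|$. $F^{(n)}_\Gamma(\delta)=\sup\{D(\mu):\mathrm{def}(\mu)\le\delta,\mu(e)=\mathrm{Id}\}$ over maps $\mu:\Gamma\to U(n)$; $\mathrm{def}^{(n)}(\Gamma)=\lim_{\delta\to0^+}F^{(n)}_\Gamma(\delta)$. $F^{fd}_\Gamma$ and $\mathrm{def}^{fd}(\Gamma)$ are defined the same way with the supremum over all finite dimensions; $\Gamma$ is Ulam stable if $\mathrm{def}^{fd}(\Gamma)=0$. *)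

theory Defs
  imports "HOL-Algebra.Group" "Jordan_Normal_Form.Matrix"
begin

definition vnorm :: "complex vec \<Rightarrow> real" where
  "vnorm x = sqrt (\<Sum>i<dim_vec x. (cmod (x $ i))^2)"

definition opnorm :: "nat \<Rightarrow> complex mat \<Rightarrow> real" where
  "opnorm n A = Sup {vnorm (A *\<^sub>v x) | x. x \<in> carrier_vec n \<and> vnorm x = 1}"

definition unitary_group :: "nat \<Rightarrow> complex mat set" where
  "unitary_group n = {U. U \<in> carrier_mat n n \<and> U * map_mat cnj (transpose_mat U) = 1\<^sub>m n}"

definition unitary_homs :: "('g, 'b) monoid_scheme \<Rightarrow> nat \<Rightarrow> ('g \<Rightarrow> complex mat) set" where
  "unitary_homs G n = {\<nu>. \<nu> \<in> carrier G \<rightarrow> unitary_group n \<and>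
     (\<forall>x\<in>carrier G. \<forall>y\<in>carrier G. \<nu> (x \<otimes>\<^bsub>G\<^esub> y) = \<nu> x * \<nu> y)}"

definition map_dist :: "('g, 'b) monoid_scheme \<Rightarrow> nat \<Rightarrow> ('g \<Rightarrow> complex mat) \<Rightarrow> ('g \<Rightarrow> complex mat) \<Rightarrow> real" where
  "map_dist G n \<mu> \<nu> = Sup {opnorm n (\<mu> g - \<nu> g) | g. g \<in> carrier G}"

definition dist_to_homs :: "('g, 'b) monoid_scheme \<Rightarrow> nat \<Rightarrow> ('g \<Rightarrow> complex mat) \<Rightarrow> real" where
  "dist_to_homs G n \<mu> = Inf {map_dist G n \<mu> \<nu> | \<nu>. \<nu> \<in> unitary_homs G n}"

definition map_defect :: "('g, 'b) monoid_scheme \<Rightarrow> nat \<Rightarrow> ('g \<Rightarrow> complex mat) \<Rightarrow> real" where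
  "map_defect G n \<mu> = Sup {opnorm n (\<mu> (x \<otimes>\<^bsub>G\<^esub> y) - \<mu> x * \<mu> y) | x y. x \<in> carrier G \<and> y \<in> carrier G}"

definition admissible_maps :: "('g, 'b) monoid_scheme \<Rightarrow> nat \<Rightarrow> real \<Rightarrow> ('g \<Rightarrow> complex mat) set" where
  "admissible_maps G n \<delta> = {\<mu>. \<mu> \<in> carrier G \<rightarrow> unitary_group n \<and> map_defect G n \<mu> \<le> \<delta>
      \<and> \<mu> \<one>\<^bsub>G\<^esub> = 1\<^sub>m n}"

definition F_n :: "('g, 'b) monoid_scheme \<Rightarrow> nat \<Rightarrow> real \<Rightarrow> real" where
  "F_n G n \<delta> = Sup (dist_to_homs G n ` admissible_maps G n \<delta>)"

definition def_n :: "('g, 'b) monoid_scheme \<Rightarrow> nat \<Rightarrow> real" where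
  "def_n G n = Lim (at_right 0) (F_n G n)"

definition F_fd :: "('g, 'b) monoid_scheme \<Rightarrow> real \<Rightarrow> real" where
  "F_fd G \<delta> = Sup (\<Union>n\<in>{1..}. dist_to_homs G n ` admissible_maps G n \<delta>)"

definition def_fd :: "('g, 'b) monoid_scheme \<Rightarrow> real" where
  "def_fd G = Lim (at_right 0) (F_fd G)"

definition ulam_stable :: "('g, 'b) monoid_scheme \<Rightarrow> bool" where
  "ulam_stable G \<longleftrightarrow> def_fd G = 0"

section \<open>Degree-2 comparison map H^2_b(G,R) -> H^2(G,R) (inhomogeneous cochains, trivial coefficients)\<close>

definition cocycle2 :: "('g, 'b) monoid_scheme \<Rightarrow> ('g \<Rightarrow> 'g \<Rightarrow> real) \<Rightarrow> bool" where
  "cocycle2 G c \<longleftrightarrow> (\<forall>g1\<in>carrier G. \<forall>g2\<in>carrier G. \<forall>g3\<in>carrier G.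
     c g2 g3 - c (g1 \<otimes>\<^bsub>G\<^esub> g2) g3 + c g1 (g2 \<otimes>\<^bsub>G\<^esub> g3) - c g1 g2 = 0)"

definition coboundary1 :: "('g, 'b) monoid_scheme \<Rightarrow> ('g \<Rightarrow> real) \<Rightarrow> 'g \<Rightarrow> 'g \<Rightarrow> real" where
  "coboundary1 G f g h = f h - f (g \<otimes>\<^bsub>G\<^esub> h) + f g"

definition bounded_cochain1 :: "('g, 'b) monoid_scheme \<Rightarrow> ('g \<Rightarrow> real) \<Rightarrow> bool" where
  "bounded_cochain1 G f \<longleftrightarrow> (\<exists>B. \<forall>g\<in>carrier G. \<bar>f g\<bar> \<le> B)"

definition bounded_cochain2 :: "('g, 'b) monoid_scheme \<Rightarrow> ('g \<Rightarrow> 'g \<Rightarrow> real) \<Rightarrow> bool" where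
  "bounded_cochain2 G c \<longleftrightarrow> (\<exists>B. \<forall>g\<in>carrier G. \<forall>h\<in>carrier G. \<bar>c g h\<bar> \<le> B)"

definition is_coboundary_of :: "('g, 'b) monoid_scheme \<Rightarrow> ('g \<Rightarrow> 'g \<Rightarrow> real) \<Rightarrow> ('g \<Rightarrow> real) \<Rightarrow> bool" where
  "is_coboundary_of G c f \<longleftrightarrow> (\<forall>g\<in>carrier G. \<forall>h\<in>carrier G. c g h = coboundary1 G f g h)"

text \<open>The comparison map [c]_b |-> [c] is not injective: some bounded 2-cocycle is
  the coboundary of a 1-cochain, but not of a bounded 1-cochain.\<close>
definition comparison2_not_injective :: "('g, 'b) monoid_scheme \<Rightarrow> bool" where
  "comparison2_not_injective G \<longleftrightarrow> (\<exists>c. cocycle2 G c \<and> bounded_cochain2 G c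
     \<and> (\<exists>f. is_coboundary_of G c f)
     \<and> \<not> (\<exists>f. bounded_cochain1 G f \<and> is_coboundary_of G c f))"

end

theory Submission
  imports Defs "Jordan_Normal_Form.Determinant"
begin


lemma vnorm_sq: "(vnorm x)^2 = (\<Sum>i<dim_vec x. (cmod (x $ i))^2)"
  unfolding vnorm_def by (rule real_sqrt_pow2, rule sum_nonneg, simp)

lemma vnorm_ge0: "vnorm x \<ge> 0" unfolding vnorm_def by (simp add: sum_nonneg)

lemma unitary_iso:
  assumes U: "U \<in> unitary_group n" and x: "x \<in> carrier_vec n"
  shows "vnorm (U *\<^sub>v x) = vnorm x"
proof -
  let ?V = "map_mat cnj (transpose_mat U)"
  have Uc: "U \<in> carrier_mat n n" and UV: "U * ?V = 1\<^sub>m n" using U unfolding unitary_group_def by auto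
  have Vc: "?V \<in> carrier_mat n n" using Uc by auto
  have VU: "?V * U = 1\<^sub>m n" using mat_mult_left_right_inverse[OF Uc Vc UV] .
  have VUe: "(\<Sum>i<n. cnj (U $$ (i,k)) * U $$ (i,j)) = (if k = j then 1 else 0)" if "k < n" "j < n" for k j
  proof -
    have "(?V * U) $$ (k,j) = (\<Sum>i<n. cnj (U $$ (i,k)) * U $$ (i,j))"
      using that Uc by (simp add: scalar_prod_def row_def col_def lessThan_atLeast0)
    then show ?thesis using VU that by simp
  qed
  have cm: "complex_of_real ((cmod z)^2) = z * cnj z" for z :: complex
    by (rule complex_norm_square)
  have Uxi: "(U *\<^sub>v x) $ i = (\<Sum>j<n. U $$ (i,j) * x $ j)" if "i < n" for i
    using that Uc x by (simp add: scalar_prod_def row_def lessThan_atLeast0)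
  have "complex_of_real ((vnorm (U *\<^sub>v x))^2) = (\<Sum>i<n. (U *\<^sub>v x) $ i * cnj ((U *\<^sub>v x) $ i))"
    unfolding vnorm_sq of_real_sum complex_norm_square using Uc by simp
  also have "\<dots> = (\<Sum>i<n. \<Sum>j<n. \<Sum>k<n. (U $$ (i,j) * x $ j) * cnj (U $$ (i,k) * x $ k))"
    by (rule sum.cong, simp, simp add: Uxi sum_distrib_left sum_distrib_right cnj_sum, rule sum.swap)
  also have "\<dots> = (\<Sum>j<n. \<Sum>k<n. \<Sum>i<n. (U $$ (i,j) * x $ j) * cnj (U $$ (i,k) * x $ k))"
    by (subst sum.swap, rule sum.cong[OF refl], rule sum.swap)
  also have "\<dots> = (\<Sum>j<n. \<Sum>k<n. x $ j * cnj (x $ k) * (\<Sum>i<n. cnj (U $$ (i,k)) * U $$ (i,j)))"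
    by (simp add: sum_distrib_left mult_ac)
  also have "\<dots> = (\<Sum>j<n. \<Sum>k<n. if k = j then x $ j * cnj (x $ k) else 0)"
    by (intro sum.cong refl, simp add: VUe)
  also have "\<dots> = (\<Sum>j<n. x $ j * cnj (x $ j))" by simp
  also have "\<dots> = complex_of_real ((vnorm x)^2)"
    unfolding vnorm_sq of_real_sum complex_norm_square using x by simp
  finally have "(vnorm (U *\<^sub>v x))^2 = (vnorm x)^2" using of_real_eq_iff by blast
  then show ?thesis using vnorm_ge0 by (simp add: power2_eq_iff_nonneg)
qed

lemma vnorm_diff_le2:
  assumes "dim_vec a = dim_vec b" "vnorm a = 1" "vnorm b = 1"
  shows "vnorm (a - b) \<le> 2"
proof -
  have "(vnorm (a - b))^2 = (\<Sum>i<dim_vec a. (cmod (a $ i - b $ i))^2)"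
    using assms by (simp add: vnorm_sq)
  also have "\<dots> \<le> (\<Sum>i<dim_vec a. 2 * (cmod (a $ i))^2 + 2 * (cmod (b $ i))^2)"
  proof (rule sum_mono)
    fix i
    have "cmod (a $ i - b $ i) \<le> cmod (a $ i) + cmod (b $ i)" by (rule norm_triangle_ineq4)
    then have "(cmod (a $ i - b $ i))^2 \<le> (cmod (a $ i) + cmod (b $ i))^2"
      by (simp add: power_mono)
    also have "\<dots> \<le> 2 * (cmod (a $ i))^2 + 2 * (cmod (b $ i))^2"
      using zero_le_square[of "cmod (a $ i) - cmod (b $ i)"] by (simp add: power2_eq_square algebra_simps)
    finally show "(cmod (a $ i - b $ i))^2 \<le> 2 * (cmod (a $ i))^2 + 2 * (cmod (b $ i))^2" .
  qed
  also have "\<dots> = 2 * (vnorm a)^2 + 2 * (vnorm b)^2"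
    using assms(1) by (simp add: vnorm_sq sum.distrib sum_distrib_left)
  also have "\<dots> = 2^2" using assms by simp
  finally show ?thesis by (rule power2_le_imp_le) simp
qed




lemma one_unitary: "1\<^sub>m n \<in> unitary_group n"
  unfolding unitary_group_def by (auto intro!: eq_matI)

lemma opnorm_bounds:
  assumes n: "n \<ge> 1" and U: "U \<in> unitary_group n" and V: "V \<in> unitary_group n"
  shows "0 \<le> opnorm n (U - V) \<and> opnorm n (U - V) \<le> 2"
proof -
  let ?S = "{vnorm ((U - V) *\<^sub>v x) | x. x \<in> carrier_vec n \<and> vnorm x = 1}"
  have Uc: "U \<in> carrier_mat n n" and Vc: "V \<in> carrier_mat n n" using U V unfolding unitary_group_def by auto
  define e where "e = (unit_vec n 0 :: complex vec)"
  have ec: "e \<in> carrier_vec n" unfolding e_def by simp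
  have "vnorm e = 1"
  proof -
    have "(\<Sum>i<n. (cmod (e $ i))^2) = (\<Sum>i<n. if i = 0 then 1 else 0)"
      by (rule sum.cong) (auto simp: e_def)
    also have "\<dots> = 1" using n by simp
    finally show ?thesis unfolding vnorm_def e_def by simp
  qed
  then have ne: "?S \<noteq> {}" using ec by blast
  have le2: "y \<le> 2" if "y \<in> ?S" for y
  proof -
    from that obtain x where x: "x \<in> carrier_vec n" "vnorm x = 1" and y: "y = vnorm ((U - V) *\<^sub>v x)" by blast
    have "(U - V) *\<^sub>v x = U *\<^sub>v x - V *\<^sub>v x" using minus_mult_distrib_mat_vec[OF Uc Vc x(1)] .
    moreover have "vnorm (U *\<^sub>v x) = 1" "vnorm (V *\<^sub>v x) = 1" using unitary_iso[OF U x(1)] unitary_iso[OF V x(1)] x by auto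
    moreover have "dim_vec (U *\<^sub>v x) = dim_vec (V *\<^sub>v x)" using Uc Vc by simp
    ultimately show ?thesis using y vnorm_diff_le2 by simp
  qed
  have "Sup ?S \<le> 2" by (rule cSup_least[OF ne]) (use le2 in blast)
  moreover have "0 \<le> Sup ?S"
  proof -
    obtain y where "y \<in> ?S" using ne by blast
    moreover have "bdd_above ?S" unfolding bdd_above_def using le2 by blast
    ultimately have "y \<le> Sup ?S" by (rule cSup_upper)
    moreover have "0 \<le> y" using \<open>y \<in> ?S\<close> vnorm_ge0 by auto
    ultimately show ?thesis by linarith
  qed
  ultimately show ?thesis unfolding opnorm_def by simp
qed

lemma map_dist_bounds:
  assumes G: "group G" and n: "n \<ge> 1" and mu: "\<mu> \<in> carrier G \<rightarrow> unitary_group n"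
    and nu: "\<nu> \<in> carrier G \<rightarrow> unitary_group n"
  shows "0 \<le> map_dist G n \<mu> \<nu> \<and> map_dist G n \<mu> \<nu> \<le> 2"
proof -
  let ?S = "{opnorm n (\<mu> g - \<nu> g) | g. g \<in> carrier G}"
  have b: "0 \<le> y \<and> y \<le> 2" if "y \<in> ?S" for y
    using that opnorm_bounds[OF n] mu nu by blast
  have "\<one>\<^bsub>G\<^esub> \<in> carrier G" using G by (simp add: group.is_monoid monoid.one_closed)
  then have ne: "?S \<noteq> {}" by blast
  have "Sup ?S \<le> 2" by (rule cSup_least[OF ne]) (use b in blast)
  moreover have "0 \<le> Sup ?S"
  proof -
    obtain y where "y \<in> ?S" using ne by blast
    moreover have "bdd_above ?S" unfolding bdd_above_def using b by blast
    ultimately have "y \<le> Sup ?S" by (rule cSup_upper)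
    then show ?thesis using b \<open>y \<in> ?S\<close> by force
  qed
  ultimately show ?thesis unfolding map_dist_def by simp
qed

lemma triv_hom: assumes G: "group G" shows "(\<lambda>g. 1\<^sub>m n) \<in> unitary_homs G n"
  unfolding unitary_homs_def using one_unitary by auto

lemma dist_to_homs_bounds:
  assumes G: "group G" and n: "n \<ge> 1" and mu: "\<mu> \<in> carrier G \<rightarrow> unitary_group n"
  shows "0 \<le> dist_to_homs G n \<mu> \<and> dist_to_homs G n \<mu> \<le> 2"
proof -
  let ?S = "{map_dist G n \<mu> \<nu> | \<nu>. \<nu> \<in> unitary_homs G n}"
  have b: "0 \<le> y \<and> y \<le> 2" if "y \<in> ?S" for y
    using that map_dist_bounds[OF G n mu] unfolding unitary_homs_def by blast
  have t: "map_dist G n \<mu> (\<lambda>g. 1\<^sub>m n) \<in> ?S" using triv_hom[OF G] by blast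
  then have ne: "?S \<noteq> {}" by blast
  have "0 \<le> Inf ?S" by (rule cInf_greatest[OF ne]) (use b in blast)
  moreover have "Inf ?S \<le> 2"
  proof -
    have "bdd_below ?S" unfolding bdd_below_def using b by blast
    then have "Inf ?S \<le> map_dist G n \<mu> (\<lambda>g. 1\<^sub>m n)" using t by (rule cInf_lower[rotated])
    then show ?thesis using b t by force
  qed
  ultimately show ?thesis unfolding dist_to_homs_def by simp
qed

definition mat1 :: "complex \<Rightarrow> complex mat" where "mat1 z = mat 1 1 (\<lambda>_. z)"

lemma mat1_unitary: "cmod z = 1 \<Longrightarrow> mat1 z \<in> unitary_group 1"
  unfolding unitary_group_def mat1_def
  by (auto intro!: eq_matI simp: scalar_prod_def row_def col_def complex_norm_square[symmetric])

lemma unitary1: assumes "U \<in> unitary_group 1"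
  shows "U = mat1 (U $$ (0,0))" "cmod (U $$ (0,0)) = 1"
proof -
  have Uc: "U \<in> carrier_mat 1 1" and UV: "U * map_mat cnj (transpose_mat U) = 1\<^sub>m 1"
    using assms unfolding unitary_group_def by auto
  show "U = mat1 (U $$ (0,0))" unfolding mat1_def using Uc by (auto intro!: eq_matI)
  have "(U * map_mat cnj (transpose_mat U)) $$ (0,0) = 1" using UV by simp
  then have "U $$ (0,0) * cnj (U $$ (0,0)) = 1" using Uc by (simp add: scalar_prod_def row_def col_def)
  then have "complex_of_real ((cmod (U $$ (0,0)))^2) = 1" by (simp only: complex_norm_square)
  then have "(cmod (U $$ (0,0)))^2 = 1" using of_real_eq_1_iff by blast
  then show "cmod (U $$ (0,0)) = 1" using norm_ge_zero[of "U $$ (0,0)"] by (simp add: power2_eq_1_iff)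
qed

lemma mat1_diff: "mat1 a - mat1 b = mat1 (a - b)"
  unfolding mat1_def by (auto intro!: eq_matI)
lemma mat1_mult: "mat1 a * mat1 b = mat1 (a * b)"
  unfolding mat1_def by (auto intro!: eq_matI simp: scalar_prod_def row_def col_def)

lemma opnorm_mat1: "opnorm 1 (mat1 a) = cmod a"
proof -
  have "{vnorm (mat1 a *\<^sub>v x) | x. x \<in> carrier_vec 1 \<and> vnorm x = 1} = {cmod a}"
  proof (intro equalityI subsetI)
    fix y assume "y \<in> {vnorm (mat1 a *\<^sub>v x) | x. x \<in> carrier_vec 1 \<and> vnorm x = 1}"
    then obtain x where x: "x \<in> carrier_vec 1" "vnorm x = 1" and y: "y = vnorm (mat1 a *\<^sub>v x)" by blast
    have "cmod (x $ 0) = 1" using x unfolding vnorm_def by simp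
    then show "y \<in> {cmod a}" using x y unfolding vnorm_def mat1_def
      by (simp add: scalar_prod_def row_def norm_mult)
  next
    fix y assume "y \<in> {cmod a}"
    moreover have "vec 1 (\<lambda>_. 1) \<in> carrier_vec 1 \<and> vnorm (vec 1 (\<lambda>_. 1 :: complex)) = 1"
      unfolding vnorm_def by simp
    moreover have "vnorm (mat1 a *\<^sub>v vec 1 (\<lambda>_. 1)) = cmod a"
      unfolding vnorm_def mat1_def by (simp add: scalar_prod_def row_def)
    ultimately show "y \<in> {vnorm (mat1 a *\<^sub>v x) | x. x \<in> carrier_vec 1 \<and> vnorm x = 1}" by force
  qed
  then show ?thesis unfolding opnorm_def by simp
qed




lemma cis_minus_one_le: "cmod (cis x - 1) \<le> \<bar>x\<bar>"
proof -
  have "(cmod (cis x - 1))^2 = (cos x - 1)^2 + (sin x)^2" by (simp add: cmod_power2)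
  also have "\<dots> = 2 - 2 * cos x" using sin_cos_squared_add[of x] by (simp add: power2_eq_square algebra_simps)
  also have "\<dots> = 4 * (sin (x/2))^2" using cos_double_sin[of "x/2"] by simp
  also have "\<dots> \<le> 4 * (x/2)^2"
  proof -
    have "(sin (x/2))^2 \<le> (x/2)^2" using abs_le_square_iff[THEN iffD1, OF abs_sin_x_le_abs_x[of "x/2"]] .
    then show ?thesis by simp
  qed
  also have "\<dots> = x^2" by (simp add: power2_eq_square)
  finally have "(cmod (cis x - 1))^2 \<le> \<bar>x\<bar>^2" by simp
  then show ?thesis by (rule power2_le_imp_le) simp
qed

lemma arccos_half: "arccos (1/2) = pi/3"
  using arccos_cos[of "pi/3"] cos_60 by simp

lemma alpha_lt:
  assumes "0 \<le> s" "s < sqrt 3"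
  shows "arccos (1 - s^2/2) < 2*pi/3" "0 \<le> arccos (1 - s^2/2)"
proof -
  have s2: "s^2 < 3" using power_strict_mono[OF assms(2) assms(1), of 2] by simp
  have "-1 \<le> (-1/2::real)" "-1/2 < 1 - s^2/2" "1 - s^2/2 \<le> 1" using s2 by auto
  then have "arccos (1 - s^2/2) < arccos (-1/2)" by (rule arccos_less_arccos)
  also have "arccos (-1/2) = pi - pi/3" using arccos_minus[of "1/2"] arccos_half by simp
  finally show "arccos (1 - s^2/2) < 2*pi/3" by simp
  show "0 \<le> arccos (1 - s^2/2)" using s2 by (intro arccos_lbound) auto
qed

lemma angle:
  assumes w: "cmod w = 1" and ws: "cmod (w - 1) \<le> s" and s: "0 \<le> s" "s < sqrt 3"
  shows "\<exists>t. w = cis t \<and> \<bar>t\<bar> \<le> arccos (1 - s^2/2)"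
proof -
  define y where "y = Re w"
  have sq: "y^2 + (Im w)^2 = 1" using w cmod_power2[of w] unfolding y_def by simp
  have y1: "\<bar>y\<bar> \<le> 1" using abs_Re_le_cmod[of w] w unfolding y_def by simp
  have "(cmod (w - 1))^2 = (y - 1)^2 + (Im w)^2" unfolding y_def by (simp add: cmod_power2)
  also have "\<dots> = 2 - 2*y" using sq by (simp add: power2_eq_square algebra_simps)
  finally have eqy: "(cmod (w - 1))^2 = 2 - 2*y" .
  moreover have "(cmod (w - 1))^2 \<le> s^2" using power_mono[OF ws norm_ge_zero, of 2] .
  ultimately have "2 - 2*y \<le> s^2" by simp
  then have ylow: "1 - s^2/2 \<le> y" by simp
  have s2: "s^2 < 3" using power_strict_mono[OF s(2) s(1), of 2] by simp
  have t0le: "arccos y \<le> arccos (1 - s^2/2)"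
    by (rule arccos_le_arccos) (use s2 ylow y1 in auto)
  have sinv: "sin (arccos y) = \<bar>Im w\<bar>"
  proof -
    have "sin (arccos y) = sqrt (1 - y^2)" using sin_arccos_abs y1 by simp
    also have "1 - y^2 = (Im w)^2" using sq by simp
    finally show ?thesis by simp
  qed
  have cosv: "cos (arccos y) = y" using y1 by simp
  define t where "t = (if Im w \<ge> 0 then arccos y else - arccos y)"
  have "Re (cis t) = Re w" using cosv unfolding t_def y_def by simp
  moreover have "Im (cis t) = Im w" using sinv unfolding t_def by auto
  ultimately have "w = cis t" by (simp add: complex_eqI)
  moreover have "\<bar>t\<bar> \<le> arccos (1 - s^2/2)"
    using t0le arccos_lbound[of y] y1 by (auto simp: t_def)
  ultimately show ?thesis by blast
qed

lemma dense_ge: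
  fixes x a :: real
  assumes "0 < a" "\<And>s. 0 \<le> s \<Longrightarrow> s < a \<Longrightarrow> s \<le> x"
  shows "a \<le> x"
proof (rule ccontr)
  assume "\<not> a \<le> x"
  then have "x < a" by simp
  have "0 \<le> x" using assms(2)[of 0] assms(1) by simp
  then show False using assms(2)[of "(x+a)/2"] \<open>x < a\<close> by simp
qed

lemma lim_ge:
  fixes g :: "real \<Rightarrow> real"
  assumes lb: "\<And>d. 0 < d \<Longrightarrow> a \<le> g d"
    and mono: "\<And>d1 d2. 0 < d1 \<Longrightarrow> d1 \<le> d2 \<Longrightarrow> g d1 \<le> g d2"
  shows "a \<le> Lim (at_right 0) g"
proof -
  define L where "L = Inf (g ` {0<..})"
  have "g 1 \<in> g ` {0<..}" by simp
  then have ne: "g ` {0<..} \<noteq> {}" by blast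
  have bb: "bdd_below (g ` {0<..})" unfolding bdd_below_def using lb by auto
  have aL: "a \<le> L" unfolding L_def by (rule cInf_greatest[OF ne]) (use lb in auto)
  have Lle: "L \<le> g d" if "0 < d" for d unfolding L_def by (rule cInf_lower[OF _ bb]) (use that in auto)
  have "(g \<longlongrightarrow> L) (at_right 0)"
  proof (rule order_tendstoI)
    fix y assume "y < L"
    have ev: "eventually (\<lambda>x. x \<in> {0<..<(1::real)}) (at_right 0)"
      by (rule eventually_at_right_real) simp
    show "eventually (\<lambda>x. y < g x) (at_right 0)"
      using ev
    proof (rule eventually_mono)
      fix x assume "x \<in> {0<..<(1::real)}"
      then show "y < g x" using Lle[of x] \<open>y < L\<close> by simp
    qed
  next
    fix y assume "L < y"
    then obtain z where z: "z \<in> g ` {0<..}" "z < y" using cInf_lessD[OF ne] unfolding L_def by blast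
    then obtain x0 where x0: "0 < x0" "g x0 < y" by auto
    show "eventually (\<lambda>x. g x < y) (at_right 0)"
      using eventually_at_right_real[OF x0(1)]
    proof (rule eventually_mono)
      fix x assume "x \<in> {0<..<x0}"
      then have "g x \<le> g x0" using mono[of x x0] by simp
      then show "g x < y" using x0 by simp
    qed
  qed
  then have "Lim (at_right 0) g = L" by (rule tendsto_Lim[rotated]) simp
  then show ?thesis using aL by simp
qed




lemma mat1_00[simp]: "mat1 a $$ (0,0) = a" unfolding mat1_def by simp
lemma mat1_one: "mat1 1 = 1\<^sub>m 1" unfolding mat1_def by (auto intro!: eq_matI)

lemma cis_defect: "cmod (cis a - cis b * cis c) \<le> \<bar>a - b - c\<bar>"
proof -
  have "cis a - cis b * cis c = cis (b + c) * (cis (a - b - c) - 1)"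
    by (simp add: cis_mult algebra_simps)
  then have "cmod (cis a - cis b * cis c) = cmod (cis (a - b - c) - 1)" by (simp add: norm_mult)
  then show ?thesis using cis_minus_one_le by simp
qed

lemma key:
  fixes G :: "('g, 'b) monoid_scheme" and F :: "'g \<Rightarrow> real"
  assumes G: "group G" and D: "0 \<le> D"
    and Fb: "\<And>g h. g \<in> carrier G \<Longrightarrow> h \<in> carrier G \<Longrightarrow> \<bar>F (g \<otimes>\<^bsub>G\<^esub> h) - F g - F h\<bar> \<le> D"
    and F1: "F \<one>\<^bsub>G\<^esub> = 0"
    and nodec: "\<not> (\<exists>b \<phi>. (\<exists>B. \<forall>g\<in>carrier G. \<bar>b g\<bar> \<le> B)
        \<and> (\<forall>g\<in>carrier G. \<forall>h\<in>carrier G. \<phi> (g \<otimes>\<^bsub>G\<^esub> h) = \<phi> g + \<phi> h)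
        \<and> (\<forall>g\<in>carrier G. F g = b g + \<phi> g))"
    and \<delta>: "0 < \<delta>" and s: "0 \<le> s" "s < sqrt 3"
  shows "\<exists>\<mu> \<in> admissible_maps G 1 \<delta>. s \<le> dist_to_homs G 1 \<mu>"
proof -
  define \<alpha> where "\<alpha> = arccos (1 - s^2/2)"
  have \<alpha>: "\<alpha> < 2*pi/3" "0 \<le> \<alpha>" using alpha_lt[OF s] unfolding \<alpha>_def by auto
  define \<epsilon> where "\<epsilon> = min (\<delta> / (2*pi*(D+1))) ((2*pi - 3*\<alpha>) / (4*pi*(D+1)))"
  have \<epsilon>pos: "0 < \<epsilon>" unfolding \<epsilon>_def using \<delta> D \<alpha> by (auto intro!: divide_pos_pos)
  have e1: "2*pi*\<epsilon>*D \<le> \<delta>"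
  proof -
    have cp: "0 < 2*pi*(D+1)" using D by simp
    have "\<epsilon> \<le> \<delta> / (2*pi*(D+1))" unfolding \<epsilon>_def by (rule min.cobounded1)
    then have "\<epsilon> * (2*pi*(D+1)) \<le> \<delta>" using pos_le_divide_eq[OF cp] by simp
    moreover have "2*pi*\<epsilon>*D \<le> \<epsilon> * (2*pi*(D+1))" using \<epsilon>pos by (simp add: algebra_simps)
    ultimately show ?thesis by linarith
  qed
  have e2: "2*pi*\<epsilon>*D + 3*\<alpha> < 2*pi"
  proof -
    have cp: "0 < 4*pi*(D+1)" using D by simp
    have "\<epsilon> \<le> (2*pi - 3*\<alpha>) / (4*pi*(D+1))" unfolding \<epsilon>_def by (rule min.cobounded2)
    then have "\<epsilon> * (4*pi*(D+1)) \<le> 2*pi - 3*\<alpha>" using pos_le_divide_eq[OF cp] by simp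
    moreover have "2*pi*\<epsilon>*D < \<epsilon> * (4*pi*(D+1))" using \<epsilon>pos D pi_gt_zero
    proof -
      have eq: "\<epsilon> * (4*pi*(D+1)) = 2*pi*\<epsilon>*D + (2*pi*\<epsilon>*D + 4*pi*\<epsilon>)" by (simp add: algebra_simps)
      have "0 \<le> 2*pi*\<epsilon>*D" using \<epsilon>pos D by simp
      moreover have "0 < 4*pi*\<epsilon>" using \<epsilon>pos by simp
      ultimately show ?thesis unfolding eq by linarith
    qed
    ultimately show ?thesis by linarith
  qed
  have one: "\<one>\<^bsub>G\<^esub> \<in> carrier G" using G by (simp add: group.is_monoid monoid.one_closed)
  have mc: "g \<otimes>\<^bsub>G\<^esub> h \<in> carrier G" if "g \<in> carrier G" "h \<in> carrier G" for g h
    using G that by (simp add: group.is_monoid monoid.m_closed)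
  define a where "a g = 2*pi*\<epsilon>*F g" for g
  have adiff: "\<bar>a u - a v - a w\<bar> = 2*pi*\<epsilon> * \<bar>F u - F v - F w\<bar>" for u v w
  proof -
    have "a u - a v - a w = (2*pi*\<epsilon>) * (F u - F v - F w)" unfolding a_def by (simp add: right_diff_distrib)
    then have "\<bar>a u - a v - a w\<bar> = \<bar>2*pi*\<epsilon>\<bar> * \<bar>F u - F v - F w\<bar>" by (simp only: abs_mult)
    then show ?thesis using \<epsilon>pos by simp
  qed
  define \<mu> where "\<mu> g = mat1 (cis (a g))" for g
  have \<mu>U: "\<mu> \<in> carrier G \<rightarrow> unitary_group 1" unfolding \<mu>_def using mat1_unitary by simp
  have \<mu>1: "\<mu> \<one>\<^bsub>G\<^esub> = 1\<^sub>m 1" unfolding \<mu>_def a_def F1 by (simp add: mat1_one)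
  have def_le: "map_defect G 1 \<mu> \<le> \<delta>"
    unfolding map_defect_def
  proof (rule cSup_least)
    show "{opnorm 1 (\<mu> (x \<otimes>\<^bsub>G\<^esub> y) - \<mu> x * \<mu> y) | x y. x \<in> carrier G \<and> y \<in> carrier G} \<noteq> {}"
      using one by blast
  next
    fix z assume "z \<in> {opnorm 1 (\<mu> (x \<otimes>\<^bsub>G\<^esub> y) - \<mu> x * \<mu> y) | x y. x \<in> carrier G \<and> y \<in> carrier G}"
    then obtain x y where xy: "x \<in> carrier G" "y \<in> carrier G" and z: "z = opnorm 1 (\<mu> (x \<otimes>\<^bsub>G\<^esub> y) - \<mu> x * \<mu> y)" by blast
    have "z = cmod (cis (a (x \<otimes>\<^bsub>G\<^esub> y)) - cis (a x) * cis (a y))"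
      unfolding z \<mu>_def mat1_mult mat1_diff opnorm_mat1 ..
    also have "\<dots> \<le> \<bar>a (x \<otimes>\<^bsub>G\<^esub> y) - a x - a y\<bar>" by (rule cis_defect)
    also have "\<dots> = 2*pi*\<epsilon> * \<bar>F (x \<otimes>\<^bsub>G\<^esub> y) - F x - F y\<bar>"
      by (rule adiff)
    also have "\<dots> \<le> 2*pi*\<epsilon> * D" using Fb[OF xy] \<epsilon>pos by (simp add: mult_left_mono)
    finally show "z \<le> \<delta>" using e1 by linarith
  qed
  have adm: "\<mu> \<in> admissible_maps G 1 \<delta>" unfolding admissible_maps_def using \<mu>U \<mu>1 def_le by blast
  have far: "s \<le> map_dist G 1 \<mu> \<nu>" if \<nu>: "\<nu> \<in> unitary_homs G 1" for \<nu>
  proof (rule ccontr)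
    assume "\<not> s \<le> map_dist G 1 \<mu> \<nu>"
    then have lt: "map_dist G 1 \<mu> \<nu> < s" by simp
    have \<nu>U: "\<nu> \<in> carrier G \<rightarrow> unitary_group 1" and \<nu>hom: "\<And>x y. x \<in> carrier G \<Longrightarrow> y \<in> carrier G \<Longrightarrow> \<nu> (x \<otimes>\<^bsub>G\<^esub> y) = \<nu> x * \<nu> y"
      using \<nu> unfolding unitary_homs_def by auto
    define z where "z g = \<nu> g $$ (0,0)" for g
    have \<nu>z: "\<nu> g = mat1 (z g)" "cmod (z g) = 1" if "g \<in> carrier G" for g
      using unitary1[of "\<nu> g"] \<nu>U that unfolding z_def by auto
    have zhom: "z (x \<otimes>\<^bsub>G\<^esub> y) = z x * z y" if "x \<in> carrier G" "y \<in> carrier G" for x y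
    proof -
      have "\<nu> (x \<otimes>\<^bsub>G\<^esub> y) = mat1 (z x * z y)" using \<nu>hom[OF that] \<nu>z that by (simp add: mat1_mult)
      then show ?thesis unfolding z_def by simp
    qed
    have close: "cmod (cis (a g) - z g) \<le> s" if g: "g \<in> carrier G" for g
    proof -
      let ?S = "{opnorm 1 (\<mu> g - \<nu> g) | g. g \<in> carrier G}"
      have "bdd_above ?S" unfolding bdd_above_def
        using opnorm_bounds[of 1] \<mu>U \<nu>U by blast
      then have "opnorm 1 (\<mu> g - \<nu> g) \<le> map_dist G 1 \<mu> \<nu>"
        unfolding map_dist_def by (rule cSup_upper[rotated]) (use g in blast)
      then show ?thesis using lt unfolding \<mu>_def \<nu>z(1)[OF g] mat1_diff opnorm_mat1 by simp
    qed
    define w where "w g = cis (a g) * cnj (z g)" for g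
    have wt: "\<exists>t. w g = cis t \<and> \<bar>t\<bar> \<le> \<alpha>" if g: "g \<in> carrier G" for g
    proof -
      have zz: "z g * cnj (z g) = 1" using \<nu>z(2)[OF g] complex_norm_square[of "z g"] by simp
      have "w g - 1 = (cis (a g) - z g) * cnj (z g)" unfolding w_def using zz by (simp add: algebra_simps)
      then have "cmod (w g - 1) = cmod (cis (a g) - z g)" using \<nu>z(2)[OF g] by (simp add: norm_mult)
      then have "cmod (w g - 1) \<le> s" using close[OF g] by simp
      moreover have "cmod (w g) = 1" unfolding w_def using \<nu>z(2)[OF g] by (simp add: norm_mult)
      ultimately show ?thesis using angle[OF _ _ s] unfolding \<alpha>_def by blast
    qed
    define t where "t g = (SOME t. w g = cis t \<and> \<bar>t\<bar> \<le> \<alpha>)" for g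
    have t: "w g = cis (t g)" "\<bar>t g\<bar> \<le> \<alpha>" if "g \<in> carrier G" for g
      using someI_ex[OF wt[OF that]] unfolding t_def by auto
    define \<phi> where "\<phi> g = a g - t g" for g
    have cphi: "cis (\<phi> g) = z g" if g: "g \<in> carrier G" for g
    proof -
      have zz: "z g * cnj (z g) = 1" using \<nu>z(2)[OF g] complex_norm_square[of "z g"] by simp
      have ca: "cis (a g) * cnj (cis (a g)) = 1" by (simp add: cis_cnj cis_mult)
      have "cis (\<phi> g) = cis (a g) * cnj (cis (t g))" unfolding \<phi>_def by (simp add: cis_cnj cis_mult)
      also have "\<dots> = cis (a g) * cnj (w g)" using t(1)[OF g] by simp
      also have "\<dots> = (cis (a g) * cnj (cis (a g))) * z g" unfolding w_def by (simp add: mult_ac)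
      finally show ?thesis using ca by simp
    qed
    have add: "\<phi> (x \<otimes>\<^bsub>G\<^esub> y) = \<phi> x + \<phi> y" if xy: "x \<in> carrier G" "y \<in> carrier G" for x y
    proof -
      define r where "r = \<phi> (x \<otimes>\<^bsub>G\<^esub> y) - \<phi> x - \<phi> y"
      have zx: "z x * cnj (z x) = 1" "z y * cnj (z y) = 1"
        using \<nu>z(2)[OF xy(1)] \<nu>z(2)[OF xy(2)] complex_norm_square[of "z x"] complex_norm_square[of "z y"] by simp_all
      have "cis r = cis (\<phi> (x \<otimes>\<^bsub>G\<^esub> y)) * cnj (cis (\<phi> x)) * cnj (cis (\<phi> y))"
        unfolding r_def by (simp add: cis_cnj cis_mult)
      also have "\<dots> = (z x * cnj (z x)) * (z y * cnj (z y))"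
        using cphi xy mc[OF xy] zhom[OF xy] by (simp add: mult_ac)
      also have "\<dots> = 1" using zx by simp
      finally have "Re (cis r) = 1" by simp
      then have "cos r = 1" by simp
      then have "\<exists>n::int. r = real_of_int n * 2 * pi" by (rule cos_one_2pi_int[THEN iffD1])
      then obtain n :: int where n: "r = real_of_int n * 2 * pi" by blast
      have r1: "\<bar>r\<bar> \<le> \<bar>a (x \<otimes>\<^bsub>G\<^esub> y) - a x - a y\<bar> + \<bar>t (x \<otimes>\<^bsub>G\<^esub> y)\<bar> + \<bar>t x\<bar> + \<bar>t y\<bar>"
        unfolding r_def \<phi>_def by linarith
      have "2*pi*\<epsilon> * \<bar>F (x \<otimes>\<^bsub>G\<^esub> y) - F x - F y\<bar> \<le> 2*pi*\<epsilon> * D"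
        using Fb[OF xy] \<epsilon>pos by (intro mult_left_mono) simp_all
      moreover have "\<bar>t (x \<otimes>\<^bsub>G\<^esub> y)\<bar> \<le> \<alpha>" "\<bar>t x\<bar> \<le> \<alpha>" "\<bar>t y\<bar> \<le> \<alpha>"
        using t(2) xy mc[OF xy] by auto
      ultimately have "\<bar>r\<bar> \<le> 2*pi*\<epsilon> * D + 3 * \<alpha>"
        using r1 adiff[of "x \<otimes>\<^bsub>G\<^esub> y" x y] by linarith
      then have "\<bar>r\<bar> < 2*pi" using e2 by linarith
      then have "\<bar>real_of_int n\<bar> * (2*pi) < 1 * (2*pi)" using n by (simp add: abs_mult)
      then have "\<bar>real_of_int n\<bar> < 1" by (rule mult_right_less_imp_less) (use pi_gt_zero in simp)
      then have "n = 0" by linarith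
      then show ?thesis using n unfolding r_def by simp
    qed
    let ?c = "2*pi*\<epsilon>"
    have cpos: "0 < ?c" using \<epsilon>pos by simp
    have "\<exists>b \<phi>. (\<exists>B. \<forall>g\<in>carrier G. \<bar>b g\<bar> \<le> B)
        \<and> (\<forall>g\<in>carrier G. \<forall>h\<in>carrier G. \<phi> (g \<otimes>\<^bsub>G\<^esub> h) = \<phi> g + \<phi> h)
        \<and> (\<forall>g\<in>carrier G. F g = b g + \<phi> g)"
    proof -
      have bnd: "\<forall>g\<in>carrier G. \<bar>t g / ?c\<bar> \<le> \<alpha> / ?c"
      proof
        fix g assume g: "g \<in> carrier G"
        have "\<bar>t g / ?c\<bar> = \<bar>t g\<bar> / ?c" by (rule abs_div_pos[OF cpos, symmetric])
        also have "\<dots> \<le> \<alpha> / ?c" by (rule divide_right_mono[OF t(2)[OF g]]) (use cpos in simp)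
        finally show "\<bar>t g / ?c\<bar> \<le> \<alpha> / ?c" .
      qed
      have addd: "\<forall>g\<in>carrier G. \<forall>h\<in>carrier G. \<phi> (g \<otimes>\<^bsub>G\<^esub> h) / ?c = \<phi> g / ?c + \<phi> h / ?c"
      proof (intro ballI)
        fix g h assume gh: "g \<in> carrier G" "h \<in> carrier G"
        show "\<phi> (g \<otimes>\<^bsub>G\<^esub> h) / ?c = \<phi> g / ?c + \<phi> h / ?c"
          unfolding add[OF gh] by (rule add_divide_distrib)
      qed
      have dec: "\<forall>g\<in>carrier G. F g = t g / ?c + \<phi> g / ?c"
      proof
        fix g assume "g \<in> carrier G"
        have "a g = ?c * F g" unfolding a_def by simp
        have "t g / ?c + \<phi> g / ?c = (t g + \<phi> g) / ?c" by (rule add_divide_distrib[symmetric])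
        also have "t g + \<phi> g = ?c * F g" unfolding \<phi>_def \<open>a g = ?c * F g\<close> by simp
        also have "(?c * F g) / ?c = F g" using cpos \<epsilon>pos by (intro nonzero_mult_div_cancel_left) simp
        finally show "F g = t g / ?c + \<phi> g / ?c" by simp
      qed
      show ?thesis
        by (rule exI[where x="\<lambda>g. t g / ?c"], rule exI[where x="\<lambda>g. \<phi> g / ?c"]) (use bnd addd dec in blast)
    qed
    then show False using nodec by blast
  qed
  have "s \<le> dist_to_homs G 1 \<mu>"
    unfolding dist_to_homs_def
    by (rule cInf_greatest) (use triv_hom[OF G] far in blast)+
  then show ?thesis using adm by blast
qed




theorem corollary2p4:
  fixes G :: "('g, 'b) monoid_scheme"
  assumes "group G"
    and "comparison2_not_injective G"
  shows "def_n G 1 \<ge> sqrt 3 \<and> \<not> ulam_stable G"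
proof -
  note G = assms(1)
  have one: "\<one>\<^bsub>G\<^esub> \<in> carrier G" using G by (simp add: group.is_monoid monoid.one_closed)
  have mc: "g \<otimes>\<^bsub>G\<^esub> h \<in> carrier G" if "g \<in> carrier G" "h \<in> carrier G" for g h
    using G that by (simp add: group.is_monoid monoid.m_closed)
  have oo: "\<one>\<^bsub>G\<^esub> \<otimes>\<^bsub>G\<^esub> \<one>\<^bsub>G\<^esub> = \<one>\<^bsub>G\<^esub>"
    using G one by (simp add: group.is_monoid monoid.l_one)
  obtain c where cc: "cocycle2 G c" and cb: "bounded_cochain2 G c"
    and cf: "\<exists>f. is_coboundary_of G c f"
    and nb: "\<not> (\<exists>f. bounded_cochain1 G f \<and> is_coboundary_of G c f)"
    using assms(2) unfolding comparison2_not_injective_def by blast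
  obtain f where f: "\<And>g h. g \<in> carrier G \<Longrightarrow> h \<in> carrier G \<Longrightarrow> c g h = f h - f (g \<otimes>\<^bsub>G\<^esub> h) + f g"
    using cf unfolding is_coboundary_of_def coboundary1_def by blast
  obtain B where B: "\<And>g h. g \<in> carrier G \<Longrightarrow> h \<in> carrier G \<Longrightarrow> \<bar>c g h\<bar> \<le> B"
    using cb unfolding bounded_cochain2_def by blast
  have B0: "0 \<le> B" using B[OF one one] by simp
  have c11: "c \<one>\<^bsub>G\<^esub> \<one>\<^bsub>G\<^esub> = f \<one>\<^bsub>G\<^esub>" using f[OF one one] oo by simp
  define F where "F g = f g - f \<one>\<^bsub>G\<^esub>" for g
  have Fb: "\<bar>F (g \<otimes>\<^bsub>G\<^esub> h) - F g - F h\<bar> \<le> 2*B" if "g \<in> carrier G" "h \<in> carrier G" for g h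
  proof -
    have "F (g \<otimes>\<^bsub>G\<^esub> h) - F g - F h = c \<one>\<^bsub>G\<^esub> \<one>\<^bsub>G\<^esub> - c g h"
      unfolding F_def c11 f[OF that] by simp
    then show ?thesis using B[OF that] B[OF one one] by linarith
  qed
  have F1: "F \<one>\<^bsub>G\<^esub> = 0" unfolding F_def by simp
  have nodec: "\<not> (\<exists>b \<phi>. (\<exists>B. \<forall>g\<in>carrier G. \<bar>b g\<bar> \<le> B)
        \<and> (\<forall>g\<in>carrier G. \<forall>h\<in>carrier G. \<phi> (g \<otimes>\<^bsub>G\<^esub> h) = \<phi> g + \<phi> h)
        \<and> (\<forall>g\<in>carrier G. F g = b g + \<phi> g))"
  proof
    assume "\<exists>b \<phi>. (\<exists>B. \<forall>g\<in>carrier G. \<bar>b g\<bar> \<le> B)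
        \<and> (\<forall>g\<in>carrier G. \<forall>h\<in>carrier G. \<phi> (g \<otimes>\<^bsub>G\<^esub> h) = \<phi> g + \<phi> h)
        \<and> (\<forall>g\<in>carrier G. F g = b g + \<phi> g)"
    then obtain b \<phi> B' where bB: "\<forall>g\<in>carrier G. \<bar>b g\<bar> \<le> B'"
      and \<phi>: "\<forall>g\<in>carrier G. \<forall>h\<in>carrier G. \<phi> (g \<otimes>\<^bsub>G\<^esub> h) = \<phi> g + \<phi> h"
      and Fd: "\<forall>g\<in>carrier G. F g = b g + \<phi> g" by blast
    define f' where "f' g = b g + f \<one>\<^bsub>G\<^esub>" for g
    have "bounded_cochain1 G f'" unfolding bounded_cochain1_def f'_def
    proof (intro exI ballI)
      fix g assume "g \<in> carrier G"
      then show "\<bar>b g + f \<one>\<^bsub>G\<^esub>\<bar> \<le> B' + \<bar>f \<one>\<^bsub>G\<^esub>\<bar>" using bB by (smt (verit))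
    qed
    moreover have "is_coboundary_of G c f'" unfolding is_coboundary_of_def coboundary1_def
    proof (intro ballI)
      fix g h assume gh: "g \<in> carrier G" "h \<in> carrier G"
      have fe: "f x = b x + \<phi> x + f \<one>\<^bsub>G\<^esub>" if "x \<in> carrier G" for x
        using Fd that unfolding F_def by force
      show "c g h = f' h - f' (g \<otimes>\<^bsub>G\<^esub> h) + f' g"
        unfolding f[OF gh] f'_def fe[OF gh(1)] fe[OF gh(2)] fe[OF mc[OF gh]] using \<phi> gh by simp
    qed
    ultimately show False using nb by blast
  qed
  have D0: "0 \<le> 2*B" using B0 by simp
  have K: "\<exists>\<mu>\<in>admissible_maps G 1 \<delta>. s \<le> dist_to_homs G 1 \<mu>" if "0 < \<delta>" "0 \<le> s" "s < sqrt 3" for \<delta> s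
    by (rule key[OF G D0 _ F1 nodec that]) (use Fb in blast)
  have adm_mono: "admissible_maps G n d1 \<subseteq> admissible_maps G n d2" if "d1 \<le> d2" for n d1 d2
    unfolding admissible_maps_def using that by auto
  have adm_U: "\<mu> \<in> carrier G \<rightarrow> unitary_group n" if "\<mu> \<in> admissible_maps G n d" for \<mu> n d
    using that unfolding admissible_maps_def by blast
  have bdd1: "bdd_above (dist_to_homs G 1 ` admissible_maps G 1 d)" for d
    unfolding bdd_above_def using dist_to_homs_bounds[OF G _ adm_U] by auto
  have Fn_ge: "sqrt 3 \<le> F_n G 1 d" if d: "0 < d" for d
  proof (rule dense_ge)
    fix s :: real assume s: "0 \<le> s" "s < sqrt 3"
    obtain \<mu> where \<mu>: "\<mu> \<in> admissible_maps G 1 d" "s \<le> dist_to_homs G 1 \<mu>" using K[OF d s] by blast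
    have "dist_to_homs G 1 \<mu> \<le> F_n G 1 d" unfolding F_n_def
      by (rule cSup_upper[OF _ bdd1]) (use \<mu> in blast)
    then show "s \<le> F_n G 1 d" using \<mu> by linarith
  qed simp
  have Fn_mono: "F_n G 1 d1 \<le> F_n G 1 d2" if dd: "0 < d1" "d1 \<le> d2" for d1 d2
  proof -
    have "\<exists>\<mu>\<in>admissible_maps G 1 d1. 0 \<le> dist_to_homs G 1 \<mu>" using K[of d1 0] dd(1) by simp
    then obtain \<mu> where "\<mu> \<in> admissible_maps G 1 d1" by blast
    then show ?thesis unfolding F_n_def
      by (intro cSup_subset_mono bdd1 image_mono adm_mono dd(2)) blast
  qed
  have res1: "sqrt 3 \<le> def_n G 1" unfolding def_n_def by (rule lim_ge) (use Fn_ge Fn_mono in auto)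
  let ?U = "\<lambda>d. (\<Union>n\<in>{1..}. dist_to_homs G n ` admissible_maps G n d)"
  have bddU: "bdd_above (?U d)" for d
    unfolding bdd_above_def using dist_to_homs_bounds[OF G _ adm_U] by fastforce
  have sub1: "dist_to_homs G 1 ` admissible_maps G 1 d \<subseteq> ?U d" for d by auto
  have Ffd_ge: "sqrt 3 \<le> F_fd G d" if d: "0 < d" for d
  proof (rule dense_ge)
    fix s :: real assume s: "0 \<le> s" "s < sqrt 3"
    obtain \<mu> where \<mu>: "\<mu> \<in> admissible_maps G 1 d" "s \<le> dist_to_homs G 1 \<mu>" using K[OF d s] by blast
    have "dist_to_homs G 1 \<mu> \<le> F_fd G d" unfolding F_fd_def
      by (rule cSup_upper[OF _ bddU]) (use \<mu> sub1 in blast)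
    then show "s \<le> F_fd G d" using \<mu> by linarith
  qed simp
  have Ffd_mono: "F_fd G d1 \<le> F_fd G d2" if dd: "0 < d1" "d1 \<le> d2" for d1 d2
  proof -
    have "\<exists>\<mu>\<in>admissible_maps G 1 d1. 0 \<le> dist_to_homs G 1 \<mu>" using K[of d1 0] dd(1) by simp
    then obtain \<mu> where "\<mu> \<in> admissible_maps G 1 d1" by blast
    then have ne: "?U d1 \<noteq> {}" by blast
    have "?U d1 \<subseteq> ?U d2" using adm_mono[OF dd(2)] by blast
    then show ?thesis unfolding F_fd_def by (rule cSup_subset_mono[OF ne bddU])
  qed
  have "sqrt 3 \<le> def_fd G" unfolding def_fd_def by (rule lim_ge) (use Ffd_ge Ffd_mono in auto)
  then have "\<not> ulam_stable G" unfolding ulam_stable_def by auto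
  with res1 show ?thesis by simp
qed


end
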